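(* Let $A$ and $B$ be non-clopen subsets of a finite topological space $X$ which are separated (i.e. $\overline{A}\cap B=A\cap\overline{B}=\emptyset$). Let $\tilde A=\{a\in Cent_X(A)\mid \Psi(a,\partial_X(B))<rad_X(A)\}$ and $\tilde B=\{b\in Cent_X(B)\mid \Psi(b,\partial_X(A))<rad_X(B)\}$. Then $rad_X(A\cup B)\le\max\{rad_X(A),rad_X(B)\}$. Moreover: (i) if $rad_X(A)>rad_X(B)$ and $Cent_X(A)\setminus\tilde A\ne\emptyset$, then $Cent_X(A\cup B)=Cent_X(A)\setminus\tilde A$ and $rad_X(A\cup B)=rad_X(A)$; (ii) if $rad_X(A)=rad_X(B)$ and $(Cent_X(A)\setminus\tilde A)\cup(Cent_X(B)\setminus\tilde B)\ne\emptyset$, then $Cent_X(A\cup B)=(Cent_X(A)\setminus\tilde A)\cup(Cent_X(B)\setminus\tilde B)$ and $rad_X(A\cup B)=rad_X(A)=rad_X(B)$.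
   Context: For a finite topological space $X$ and $x\in X$, $U_x$ denotes the minimal open set containing $x$. A nested sequence of open sets around $x$ is a finite sequence $U_0\subsetneq U_1\subsetneq\cdots\subsetneq U_m=X$ of open sets with $U_0=U_x$ such that for each $j$ there is no open set $V$ with $U_j\subsetneq V\subsetneq U_{j+1}$. The furtherness function $\Psi:X\times X\to\{0,1,\dots,|X|-1\}$ is defined by: $\Psi(x,y)$ is the smallest integer $k\ge 0$ such that there exists a nested sequence $(U_j)_{j\ge0}$ of open sets around $x$ with $y\in U_k$. For $a\in X$ and $B\subseteq X$, $\Psi(a,B)=\min_{b\in B}\Psi(a,b)$, and for $A,B\subseteq X$, $\Psi(A,B)=\min_{a\in A}\Psi(a,B)$, with the value $\infty$ (larger than every integer) if $A$ or $B$ is empty. $\partial_X(A)$ denotes the boundary of $A$ in $X$. The center of $A$ is $Cent_X(A)=\{a\in A\mid \Psi(a,\partial_X(A))\ge\Psi(b,\partial_X(A))\ \forall b\in A\}$, and the radius is $rad_X(A)=\Psi(Cent_X(A),\partial_X(A))$ (equal to $\Psi(a,\partial_X(A))$ for any $a\in Cent_X(A)$). *)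

theory Defs
  imports "HOL-Analysis.Analysis" "HOL-Library.Extended_Nat"
begin

definition minopen :: "'a topology \<Rightarrow> 'a \<Rightarrow> 'a set" where
  "minopen X x = \<Inter>{U. openin X U \<and> x \<in> U}"

definition nested_seq :: "'a topology \<Rightarrow> 'a \<Rightarrow> 'a set list \<Rightarrow> bool" where
  "nested_seq X x Us \<longleftrightarrow> Us \<noteq> [] \<and> hd Us = minopen X x \<and> last Us = topspace X \<and>
     (\<forall>i < length Us. openin X (Us ! i)) \<and>
     (\<forall>j. Suc j < length Us \<longrightarrow> Us ! j \<subset> Us ! Suc j \<and>
        \<not> (\<exists>V. openin X V \<and> Us ! j \<subset> V \<and> V \<subset> Us ! Suc j))"

definition Psi :: "'a topology \<Rightarrow> 'a \<Rightarrow> 'a \<Rightarrow> nat" where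
  "Psi X x y = (LEAST k. \<exists>Us. nested_seq X x Us \<and> k < length Us \<and> y \<in> Us ! k)"

text \<open>Furtherness between sets; infinity if either set is empty.\<close>
definition PsiS :: "'a topology \<Rightarrow> 'a set \<Rightarrow> 'a set \<Rightarrow> enat" where
  "PsiS X A B = (INF a\<in>A. INF b\<in>B. enat (Psi X a b))"

definition Cent :: "'a topology \<Rightarrow> 'a set \<Rightarrow> 'a set" where
  "Cent X A = {a \<in> A. \<forall>b \<in> A. PsiS X {a} (X frontier_of A) \<ge> PsiS X {b} (X frontier_of A)}"

definition rad :: "'a topology \<Rightarrow> 'a set \<Rightarrow> enat" where
  "rad X A = PsiS X (Cent X A) (X frontier_of A)"

end

theory Submission
  imports Defs
begin

lemma frontier_Un_sep:
  assumes "A \<subseteq> topspace X" "B \<subseteq> topspace X"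
    and "(X closure_of A) \<inter> B = {}" and "A \<inter> (X closure_of B) = {}"
  shows "X frontier_of (A \<union> B) = X frontier_of A \<union> X frontier_of B"
proof -
  have sA: "A \<subseteq> X closure_of A" by (rule closure_of_subset[OF assms(1)])
  have sB: "B \<subseteq> X closure_of B" by (rule closure_of_subset[OF assms(2)])
  have int: "X interior_of (A \<union> B) = X interior_of A \<union> X interior_of B"
  proof
    show "X interior_of A \<union> X interior_of B \<subseteq> X interior_of (A \<union> B)"
      by (simp add: interior_of_mono)
    show "X interior_of (A \<union> B) \<subseteq> X interior_of A \<union> X interior_of B"
    proof
      fix x assume x: "x \<in> X interior_of (A \<union> B)"
      then obtain U where U: "openin X U" "x \<in> U" "U \<subseteq> A \<union> B"
        unfolding interior_of_def by blast
      show "x \<in> X interior_of A \<union> X interior_of B"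
      proof (cases "x \<in> A")
        case True
        have o: "openin X (U - X closure_of B)" using U(1) by (intro openin_diff) simp_all
        have s: "U - X closure_of B \<subseteq> A" using U(3) sB by blast
        have "x \<in> U - X closure_of B" using True U(2) assms(4) by blast
        then have "x \<in> X interior_of A" using interior_of_maximal[OF s o] by blast
        then show ?thesis by blast
      next
        case False
        then have xB: "x \<in> B" using U by blast
        have o: "openin X (U - X closure_of A)" using U(1) by (intro openin_diff) simp_all
        have s: "U - X closure_of A \<subseteq> B" using U(3) sA by blast
        have "x \<in> U - X closure_of A" using xB U(2) assms(3) by blast
        then have "x \<in> X interior_of B" using interior_of_maximal[OF s o] by blast
        then show ?thesis by blast
      qed
    qed
  qed
  have d1: "X interior_of A \<inter> X closure_of B = {}" using interior_of_subset[of X A] assms(4) by blast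
  have d2: "X interior_of B \<inter> X closure_of A = {}" using interior_of_subset[of X B] assms(3) by blast
  show ?thesis unfolding frontier_of_def int closure_of_Un using d1 d2 by blast
qed

lemma PsiS_single_Un: "PsiS X {x} (F \<union> G) = min (PsiS X {x} F) (PsiS X {x} G)"
  unfolding PsiS_def by (simp add: INF_union inf_min)

lemma PsiS_INF: "PsiS X C F = (INF a\<in>C. PsiS X {a} F)"
  unfolding PsiS_def by (simp only: image_insert image_empty cInf_singleton)

lemma key:
  fixes f :: "'a \<Rightarrow> 'b::complete_linorder"
  assumes "finite S" "S \<noteq> {}"
  shows "\<exists>m\<in>S. (\<forall>b\<in>S. f b \<le> f m) \<and> (INF a\<in>{a\<in>S. \<forall>b\<in>S. f b \<le> f a}. f a) = f m"
proof -
  have "Max (f ` S) \<in> f ` S" using assms by (intro Max_in) auto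
  then obtain m where m1: "m \<in> S" "f m = Max (f ` S)" by (auto simp del: Max_in)
  have "\<forall>b\<in>S. f b \<le> Max (f ` S)" using assms by (auto intro: Max_ge)
  then have m: "m \<in> S" "\<forall>b\<in>S. f b \<le> f m" using m1 by auto
  have "f ` {a\<in>S. \<forall>b\<in>S. f b \<le> f a} = {f m}"
  proof
    show "f ` {a\<in>S. \<forall>b\<in>S. f b \<le> f a} \<subseteq> {f m}"
      using m by (blast intro: order.antisym)
    show "{f m} \<subseteq> f ` {a\<in>S. \<forall>b\<in>S. f b \<le> f a}" using m by blast
  qed
  then have "(INF a\<in>{a\<in>S. \<forall>b\<in>S. f b \<le> f a}. f a) = f m" by simp
  then show ?thesis using m by blast
qed

lemma Cent_eq: "Cent X A = {a\<in>A. \<forall>b\<in>A. PsiS X {b} (X frontier_of A) \<le> PsiS X {a} (X frontier_of A)}"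
  unfolding Cent_def ..

lemma rad_eq: "rad X A = (INF a\<in>Cent X A. PsiS X {a} (X frontier_of A))"
  unfolding rad_def by (rule PsiS_INF)


theorem theorem2p25:
  fixes X :: "'a topology" and A B :: "'a set"
  assumes "finite (topspace X)"
    and "A \<subseteq> topspace X" and "B \<subseteq> topspace X"
    and "\<not> (openin X A \<and> closedin X A)"
    and "\<not> (openin X B \<and> closedin X B)"
    and "(X closure_of A) \<inter> B = {}" and "A \<inter> (X closure_of B) = {}"
  defines "At \<equiv> {a \<in> Cent X A. PsiS X {a} (X frontier_of B) < rad X A}"
    and "Bt \<equiv> {b \<in> Cent X B. PsiS X {b} (X frontier_of A) < rad X B}"
  shows "rad X (A \<union> B) \<le> max (rad X A) (rad X B) \<and>
         (rad X A > rad X B \<and> Cent X A - At \<noteq> {} \<longrightarrow>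
           Cent X (A \<union> B) = Cent X A - At \<and> rad X (A \<union> B) = rad X A) \<and>
         (rad X A = rad X B \<and> (Cent X A - At) \<union> (Cent X B - Bt) \<noteq> {} \<longrightarrow>
           Cent X (A \<union> B) = (Cent X A - At) \<union> (Cent X B - Bt) \<and>
           rad X (A \<union> B) = rad X A \<and> rad X (A \<union> B) = rad X B)"
proof -
  define fA where "fA x = PsiS X {x} (X frontier_of A)" for x
  define fB where "fB x = PsiS X {x} (X frontier_of B)" for x
  define fU where "fU x = PsiS X {x} (X frontier_of (A \<union> B))" for x
  have fU: "fU x = min (fA x) (fB x)" for x
    unfolding fU_def fA_def fB_def frontier_Un_sep[OF assms(2,3,6,7)] PsiS_single_Un ..
  have finA: "finite A" using assms(1,2) finite_subset by blast
  have finB: "finite B" using assms(1,3) finite_subset by blast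
  have neA: "A \<noteq> {}" using assms(4) by (metis openin_empty closedin_empty)
  have neB: "B \<noteq> {}" using assms(5) by (metis openin_empty closedin_empty)
  have CA: "Cent X A = {a\<in>A. \<forall>b\<in>A. fA b \<le> fA a}" unfolding Cent_eq fA_def ..
  have CB: "Cent X B = {a\<in>B. \<forall>b\<in>B. fB b \<le> fB a}" unfolding Cent_eq fB_def ..
  have CU: "Cent X (A \<union> B) = {a\<in>A \<union> B. \<forall>b\<in>A \<union> B. fU b \<le> fU a}" unfolding Cent_eq fU_def ..
  have RA: "rad X A = (INF a\<in>Cent X A. fA a)" unfolding rad_eq fA_def ..
  have RB: "rad X B = (INF a\<in>Cent X B. fB a)" unfolding rad_eq fB_def ..
  have RU: "rad X (A \<union> B) = (INF a\<in>Cent X (A \<union> B). fU a)" unfolding rad_eq fU_def ..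
  obtain mA where mA: "mA \<in> A" "\<forall>b\<in>A. fA b \<le> fA mA" "rad X A = fA mA"
    using key[OF finA neA, of fA] unfolding RA CA by blast
  obtain mB where mB: "mB \<in> B" "\<forall>b\<in>B. fB b \<le> fB mB" "rad X B = fB mB"
    using key[OF finB neB, of fB] unfolding RB CB by blast
  obtain mU where mU: "mU \<in> A \<union> B" "\<forall>b\<in>A \<union> B. fU b \<le> fU mU" "rad X (A \<union> B) = fU mU"
    using key[of "A \<union> B" fU] finA finB neA unfolding RU CU by blast
  have CA': "Cent X A = {a\<in>A. fA a = rad X A}" unfolding CA mA(3) using mA by (auto intro: order.antisym)
  have CB': "Cent X B = {a\<in>B. fB a = rad X B}" unfolding CB mB(3) using mB by (auto intro: order.antisym)
  have CU': "Cent X (A \<union> B) = {a\<in>A \<union> B. fU a = rad X (A \<union> B)}" unfolding CU mU(3) using mU by (auto intro: order.antisym)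
  have At: "At = {a\<in>A. fA a = rad X A \<and> fB a < rad X A}" unfolding At_def CA' fB_def by auto
  have Bt: "Bt = {a\<in>B. fB a = rad X B \<and> fA a < rad X B}" unfolding Bt_def CB' fA_def by auto
  have le: "rad X (A \<union> B) \<le> max (rad X A) (rad X B)"
  proof (cases "mU \<in> A")
    case True
    then show ?thesis using mU(3) fU mA(2,3) by (metis max.coboundedI1 min.coboundedI1 order.trans)
  next
    case False
    then have "mU \<in> B" using mU by blast
    then show ?thesis using mU(3) fU mB(2,3) by (metis max.coboundedI2 min.coboundedI2 order.trans)
  qed
  have uleA: "x \<in> A \<Longrightarrow> fU x \<le> rad X A" for x using fU mA by (metis min.coboundedI1 order.trans)
  have uleB: "x \<in> B \<Longrightarrow> fU x \<le> rad X B" for x using fU mB by (metis min.coboundedI2 order.trans)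
  have i: "Cent X (A \<union> B) = Cent X A - At \<and> rad X (A \<union> B) = rad X A"
    if h: "rad X A > rad X B" "Cent X A - At \<noteq> {}"
  proof -
    obtain a where a: "a \<in> A" "fA a = rad X A" "\<not> fB a < rad X A"
      using h(2) unfolding CA' At by blast
    have "fU a = rad X A" using a(2,3) by (simp add: fU min_def not_less)
    then have "rad X A \<le> rad X (A \<union> B)" using mU(2,3) a(1) by (metis UnI1)
    then have r: "rad X (A \<union> B) = rad X A" using le h(1) by (metis max.absorb1 max.idem order.antisym less_imp_le)
    have "Cent X (A \<union> B) = Cent X A - At"
    proof (intro set_eqI iffI)
      fix x assume "x \<in> Cent X (A \<union> B)"
      then have x: "x \<in> A \<union> B" "fU x = rad X A" unfolding CU' r by auto
      have "x \<notin> B" using uleB x h(1) by fastforce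
      then have xA: "x \<in> A" using x by blast
      have "rad X A \<le> fA x" "rad X A \<le> fB x" using x(2) unfolding fU by (metis min.bounded_iff order.refl)+
      moreover have "fA x \<le> rad X A" using mA xA by simp
      ultimately show "x \<in> Cent X A - At" using xA unfolding CA' At by (auto intro: order.antisym)
    next
      fix x assume "x \<in> Cent X A - At"
      then show "x \<in> Cent X (A \<union> B)" unfolding CU' r CA' At fU by (auto simp: min_def)
    qed
    then show ?thesis using r by simp
  qed
  have ii: "Cent X (A \<union> B) = (Cent X A - At) \<union> (Cent X B - Bt) \<and> rad X (A \<union> B) = rad X A"
    if h: "rad X A = rad X B" "(Cent X A - At) \<union> (Cent X B - Bt) \<noteq> {}"
  proof -
    have bk: "x \<in> A \<union> B \<and> fU x = rad X A" if xx: "x \<in> (Cent X A - At) \<union> (Cent X B - Bt)" for x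
    proof (cases "x \<in> Cent X A - At")
      case True
      then have "x \<in> A" "fA x = rad X A" "rad X A \<le> fB x" unfolding CA' At by auto
      then show ?thesis unfolding fU by (simp add: min_def)
    next
      case False
      then have "x \<in> Cent X B - Bt" using xx by blast
      then have "x \<in> B" "fB x = rad X A" "rad X A \<le> fA x" unfolding CB' Bt using h(1) by auto
      then show ?thesis unfolding fU by (metis UnI2 min.absorb2)
    qed
    obtain a where a: "a \<in> A \<union> B" "fU a = rad X A"
      using h(2) bk by blast
    then have "rad X A \<le> rad X (A \<union> B)" using mU(2,3) by (metis)
    moreover have "max (rad X A) (rad X B) = rad X A" using h(1) by simp
    ultimately have r: "rad X (A \<union> B) = rad X A" using le by (metis order.antisym)
    have "Cent X (A \<union> B) = (Cent X A - At) \<union> (Cent X B - Bt)"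
    proof (intro set_eqI iffI)
      fix x assume "x \<in> Cent X (A \<union> B)"
      then have x: "x \<in> A \<union> B" "fU x = rad X A" unfolding CU' r by auto
      have ge: "rad X A \<le> fA x" "rad X A \<le> fB x" using x(2) unfolding fU by (metis min.bounded_iff order.refl)+
      show "x \<in> (Cent X A - At) \<union> (Cent X B - Bt)"
      proof (cases "x \<in> A")
        case True
        have "fA x \<le> rad X A" using mA True by simp
        then show ?thesis using True ge unfolding CA' At by (auto intro: order.antisym)
      next
        case False
        then have xB: "x \<in> B" using x by blast
        have "fB x \<le> rad X B" using mB xB by simp
        then show ?thesis using xB ge h(1) unfolding CB' Bt by (auto intro: order.antisym)
      qed
    next
      fix x assume "x \<in> (Cent X A - At) \<union> (Cent X B - Bt)"
      then show "x \<in> Cent X (A \<union> B)" unfolding CU' r using bk by blast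
    qed
    then show ?thesis using r by simp
  qed
  show ?thesis
  proof (intro conjI impI)
    show "rad X (A \<union> B) \<le> max (rad X A) (rad X B)" by (rule le)
  next
    assume "rad X B < rad X A \<and> Cent X A - At \<noteq> {}"
    then show "Cent X (A \<union> B) = Cent X A - At" "rad X (A \<union> B) = rad X A" using i by blast+
  next
    assume a: "rad X A = rad X B \<and> (Cent X A - At) \<union> (Cent X B - Bt) \<noteq> {}"
    then show "Cent X (A \<union> B) = (Cent X A - At) \<union> (Cent X B - Bt)" "rad X (A \<union> B) = rad X A"
      using ii by blast+
    from a ii show "rad X (A \<union> B) = rad X B" by simp
  qed
qed

end
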